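(* Let $n\ge 2$, let $J\subseteq[n]$, let $i\in[n]\setminus J$ and put $J'=J\cup\{i\}$. If $(X_t)_{t\ge 0}$ is a continuous-time Markov chain with the transition rates of $\Theta_J$ (and any initial distribution), then $(\varphi_i(X_t))_{t\ge 0}$ is a continuous-time Markov chain with the transition rates of $\Theta_{J'}$.
   Context: Type C TASEP. Fix $n\ge 2$. There are $2n$ sites arranged in two rows and $n$ columns: upper sites $U_1,\dots,U_n$ and lower sites $L_1,\dots,L_n$. They form a cycle with the following "counter-clockwise successor": $\mathrm{succ}(U_j)=U_{j-1}$ for $j\ge2$, $\mathrm{succ}(U_1)=L_1$, $\mathrm{succ}(L_j)=L_{j+1}$ for $j<n$, $\mathrm{succ}(L_n)=U_n$. A state is a placement of particles, each carrying a positive integer class, on the sites such that no column contains more than one particle (columns may be empty). Ringing the bell at a site $s$ does the following: if $s$ holds a particle $p$, let $s'=\mathrm{succ}(s)$; if $s'$ is empty, $p$ moves to $s'$; if $s'$ holds a particle of strictly larger class than $p$, the two particles swap; otherwise nothing happens. Define $\sigma_0$ = ring the bell at $U_1$; $\sigma_n$ = ring the bell at $L_n$; for $0<j<n$, $\sigma_j$ = ring the bells at $L_j$ and at $U_{j+1}$ (these two commute). The Markov chain $\Theta$ has, from each state $x$, the transitions $x\to\sigma_j x$ for $j\in\{0,\dots,n\}$, with rate $1$ for $j\in\{0,n\}$ and rate $2$ for $0<j<n$. The number of particles of each class is preserved. Types: for $J\subseteq[n]$, start from a state with exactly one particle of each class $1,\dots,n$ (all columns occupied); for each $j\in J\setminus\{n\}$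 identify classes $j$ and $j+1$; if $n\in J$ remove the particles of (the class containing) $n$; then renumber the remaining classes by $1,2,\dots$ in increasing order. The resulting vector $\mathbf m_J=(m_1,m_2,\dots)$ of numbers of particles per class is the type, and $\Omega_J$ is the set of all states having $m_k$ particles of class $k$ for every $k$. $\Theta_J$ is the restriction of $\Theta$ to $\Omega_J$ (it is irreducible and aperiodic, with unique stationary distribution $\pi_J$). For $i\notin J$ and $J'=J\cup\{i\}$, the map $\varphi_i:\Omega_J\to\Omega_{J'}$ performs the same identification: if $i<n$ it merges the two classes separated at $i$ (those containing original classes $i$ and $i+1$) into one and renumbers; if $i=n$ it removes all particles of the largest class. *)

theory Defs
  imports "HOL-Probability.Probability"
begin

datatype site = U nat | L nat

text \<open>A state assigns to each site either no particle or a particle of a given class.\<close>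
type_synonym state = "site \<Rightarrow> nat option"

fun site_ok :: "nat \<Rightarrow> site \<Rightarrow> bool" where
  "site_ok n (U j) = (1 \<le> j \<and> j \<le> n)"
| "site_ok n (L j) = (1 \<le> j \<and> j \<le> n)"

fun succ :: "nat \<Rightarrow> site \<Rightarrow> site" where
  "succ n (U j) = (if j \<ge> 2 then U (j - 1) else L 1)"
| "succ n (L j) = (if j < n then L (j + 1) else U n)"

definition ring :: "nat \<Rightarrow> site \<Rightarrow> state \<Rightarrow> state" where
  "ring n s x =
     (case x s of
        None \<Rightarrow> x
      | Some p \<Rightarrow>
          (let s' = succ n s in
           case x s' of
             None \<Rightarrow> x(s := None, s' := Some p)
           | Some q \<Rightarrow> (if p < q then x(s := Some q, s' := Some p) else x)))"

definition sigma :: "nat \<Rightarrow> nat \<Rightarrow> state \<Rightarrow> state" where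
  "sigma n j x =
     (if j = 0 then ring n (U 1) x
      else if j = n then ring n (L n) x
      else ring n (U (j + 1)) (ring n (L j) x))"

definition wt :: "nat \<Rightarrow> nat \<Rightarrow> real" where
  "wt n j = (if j = 0 \<or> j = n then 1 else 2)"

text \<open>Total rate of jumping from x to y (y \<noteq> x) in \<Theta>.\<close>
definition rate :: "nat \<Rightarrow> state \<Rightarrow> state \<Rightarrow> real" where
  "rate n x y = (\<Sum>j\<in>{0..n}. if sigma n j x = y then wt n j else 0)"

text \<open>Image of original class c (1 \<le> c \<le> n) under the identification for J:
  None if it is removed, otherwise its renumbered class.\<close>
definition typemap :: "nat \<Rightarrow> nat set \<Rightarrow> nat \<Rightarrow> nat option" where
  "typemap n J c =
     (if {c..n} \<subseteq> J then None
      else Some (1 + card {j \<in> {1..<c}. j \<notin> J}))"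

definition mJ :: "nat \<Rightarrow> nat set \<Rightarrow> nat \<Rightarrow> nat" where
  "mJ n J k = card {c \<in> {1..n}. typemap n J c = Some k}"

definition Omega :: "nat \<Rightarrow> nat set \<Rightarrow> state set" where
  "Omega n J = {x.
      (\<forall>s. x s \<noteq> None \<longrightarrow> site_ok n s)
    \<and> (\<forall>j\<in>{1..n}. x (U j) = None \<or> x (L j) = None)
    \<and> (\<forall>k. card {s. x s = Some k} = mJ n J k)}"

text \<open>\<phi>_i : Omega n J \<rightarrow> Omega n (J \<union> {i}): a particle of class c (in the J numbering)
  gets the class (in the J\<union>{i} numbering) of any original class that maps to c.\<close>
definition phi :: "nat \<Rightarrow> nat set \<Rightarrow> nat \<Rightarrow> state \<Rightarrow> state" where
  "phi n J i x = (\<lambda>s. case x s of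
       None \<Rightarrow> None
     | Some c \<Rightarrow> typemap n (insert i J) (SOME d. d \<in> {1..n} \<and> typemap n J d = Some c))"

definition gen :: "nat \<Rightarrow> state set \<Rightarrow> state \<Rightarrow> state \<Rightarrow> real" where
  "gen n S x y = (if x = y then - (\<Sum>z\<in>S - {x}. rate n x z) else rate n x y)"

fun matpow :: "'a set \<Rightarrow> ('a \<Rightarrow> 'a \<Rightarrow> real) \<Rightarrow> nat \<Rightarrow> 'a \<Rightarrow> 'a \<Rightarrow> real" where
  "matpow S Q 0 x y = (if x = y then 1 else 0)"
| "matpow S Q (Suc k) x y = (\<Sum>z\<in>S. Q x z * matpow S Q k z y)"

definition trans :: "'a set \<Rightarrow> ('a \<Rightarrow> 'a \<Rightarrow> real) \<Rightarrow> real \<Rightarrow> 'a \<Rightarrow> 'a \<Rightarrow> real" where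
  "trans S Q t x y = (\<Sum>k. t ^ k / fact k * matpow S Q k x y)"

definition is_ctmc :: "'w measure \<Rightarrow> 'a set \<Rightarrow> ('a \<Rightarrow> 'a \<Rightarrow> real) \<Rightarrow> (real \<Rightarrow> 'w \<Rightarrow> 'a) \<Rightarrow> bool" where
  "is_ctmc M S Q X \<longleftrightarrow>
     (\<forall>t\<ge>0. \<forall>\<omega>\<in>space M. X t \<omega> \<in> S)
   \<and> (\<forall>t\<ge>0. \<forall>x. {\<omega> \<in> space M. X t \<omega> = x} \<in> sets M)
   \<and> (\<forall>(k::nat) (t::nat \<Rightarrow> real) (x::nat \<Rightarrow> 'a).
        0 \<le> t 0 \<longrightarrow> (\<forall>j<k. t j < t (Suc j)) \<longrightarrow>
        measure M {\<omega> \<in> space M. \<forall>j\<le>k. X (t j) \<omega> = x j}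
          = measure M {\<omega> \<in> space M. X (t 0) \<omega> = x 0}
            * (\<Prod>j<k. trans S Q (t (Suc j) - t j) (x j) (x (Suc j))))"

end

theory Submission
  imports Defs
begin


lemma succ_neq: "succ n s \<noteq> s"
  by (cases s) auto

lemma ring_comm:
  assumes g0: "g None = None"
    and vals: "\<forall>s. x s \<in> insert None (Some ` V)"
    and mono: "\<And>p q. p\<in>V \<Longrightarrow> q\<in>V \<Longrightarrow> p \<le> q \<Longrightarrow>
        (g (Some p) = None \<longrightarrow> g (Some q) = None) \<and> (\<forall>a b. g (Some p) = Some a \<longrightarrow> g (Some q) = Some b \<longrightarrow> a \<le> b)"
  shows "ring n s (\<lambda>t. g (x t)) = (\<lambda>t. g (ring n s x t))"
proof -
  have ne: "succ n s \<noteq> s" by (rule succ_neq)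
  show ?thesis
  proof (cases "x s")
    case None then show ?thesis by (simp add: ring_def g0)
  next
    case (Some p)
    have pV: "p \<in> V" using vals Some by (metis image_iff insertE option.distinct(1) option.inject)
    show ?thesis
    proof (cases "x (succ n s)")
      case None
      then show ?thesis using Some ne by (auto simp: ring_def g0 Let_def fun_eq_iff split: option.splits)
    next
      case (Some q)
      have qV: "q \<in> V" using vals Some by (metis image_iff insertE option.distinct(1) option.inject)
      show ?thesis
      proof (cases "p < q")
        case True
        have m: "(g (Some p) = None \<longrightarrow> g (Some q) = None) \<and> (\<forall>a b. g (Some p) = Some a \<longrightarrow> g (Some q) = Some b \<longrightarrow> a \<le> b)"
          using mono[OF pV qV] True by simp
        show ?thesis using \<open>x s = Some p\<close> Some ne True m
          by (auto simp: ring_def g0 Let_def fun_eq_iff split: option.splits)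
      next
        case False
        have m: "(g (Some q) = None \<longrightarrow> g (Some p) = None) \<and> (\<forall>a b. g (Some q) = Some a \<longrightarrow> g (Some p) = Some b \<longrightarrow> a \<le> b)"
          using mono[OF qV pV] False by simp
        show ?thesis using \<open>x s = Some p\<close> Some ne False m
          by (auto simp: ring_def g0 Let_def fun_eq_iff split: option.splits)
      qed
    qed
  qed
qed



lemma typemap_None_mono: "d1 \<le> d2 \<Longrightarrow> typemap n K d1 = None \<Longrightarrow> typemap n K d2 = None"
  by (auto simp: typemap_def split: if_splits)

lemma typemap_mono: "d1 \<le> d2 \<Longrightarrow> typemap n K d1 = Some a \<Longrightarrow> typemap n K d2 = Some b \<Longrightarrow> a \<le> b"
  unfolding typemap_def
  by (auto split: if_splits intro!: card_mono)

definition G :: "nat \<Rightarrow> nat set \<Rightarrow> nat \<Rightarrow> nat option \<Rightarrow> nat option" where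
  "G n J i v = (case v of None \<Rightarrow> None
     | Some c \<Rightarrow> typemap n (insert i J) (SOME d. d \<in> {1..n} \<and> typemap n J d = Some c))"

definition VV :: "nat \<Rightarrow> nat set \<Rightarrow> nat set" where
  "VV n J = {c. \<exists>d\<in>{1..n}. typemap n J d = Some c}"

lemma phi_eq: "phi n J i x = (\<lambda>s. G n J i (x s))"
  by (simp add: phi_def G_def)

lemma G_mono:
  assumes "p \<in> VV n J" "q \<in> VV n J" "p \<le> q"
  shows "(G n J i (Some p) = None \<longrightarrow> G n J i (Some q) = None) \<and>
         (\<forall>a b. G n J i (Some p) = Some a \<longrightarrow> G n J i (Some q) = Some b \<longrightarrow> a \<le> b)"
proof (cases "p = q")
  case True then show ?thesis by simp
next
  case False
  define dp where "dp = (SOME d. d \<in> {1..n} \<and> typemap n J d = Some p)"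
  define dq where "dq = (SOME d. d \<in> {1..n} \<and> typemap n J d = Some q)"
  have dp: "dp \<in> {1..n} \<and> typemap n J dp = Some p"
    unfolding dp_def by (rule someI_ex) (use assms(1) VV_def in blast)
  have dq: "dq \<in> {1..n} \<and> typemap n J dq = Some q"
    unfolding dq_def by (rule someI_ex) (use assms(2) VV_def in blast)
  have "dp \<le> dq"
  proof (rule ccontr)
    assume "\<not> dp \<le> dq"
    then have "q \<le> p" using typemap_mono[of dq dp n J q p] dp dq by simp
    then show False using False assms(3) by simp
  qed
  moreover have "G n J i (Some p) = typemap n (insert i J) dp" "G n J i (Some q) = typemap n (insert i J) dq"
    by (simp_all add: G_def dp_def dq_def)
  ultimately show ?thesis
    using typemap_mono[of dp dq n "insert i J"] typemap_None_mono[of dp dq n "insert i J"]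
    by auto
qed



definition sw :: "site \<Rightarrow> site \<Rightarrow> site \<Rightarrow> site" where
  "sw a b t = (if t = a then b else if t = b then a else t)"

lemma sw_inv: "sw a b (sw a b t) = t" by (auto simp: sw_def)

lemma inj_sw: "inj (sw a b)" by (metis injI sw_inv)

lemma card_sw: "card {t. x (sw a b t) = v} = card {t. x t = v}"
proof -
  have "{t. x (sw a b t) = v} = sw a b ` {t. x t = v}"
    by (auto simp: image_iff sw_inv intro!: exI[of _ "sw a b _"])
  then show ?thesis using card_image[OF inj_on_subset[OF inj_sw subset_UNIV]] by simp
qed

lemma ring_cases: "ring n s x = x \<or> (x s \<noteq> None \<and> ring n s x = (\<lambda>t. x (sw s (succ n s) t)))"
proof (cases "x s")
  case None then show ?thesis by (simp add: ring_def)
next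
  case (Some p)
  note ne = succ_neq[of n s]
  show ?thesis
  proof (cases "x (succ n s)")
    case None
    then have "ring n s x = (\<lambda>t. x (sw s (succ n s) t))"
      using Some ne by (auto simp: ring_def sw_def Let_def fun_eq_iff)
    then show ?thesis using \<open>x s = Some p\<close> by simp
  next
    case (Some q)
    show ?thesis
    proof (cases "p < q")
      case True
      then have "ring n s x = (\<lambda>t. x (sw s (succ n s) t))"
        using Some \<open>x s = Some p\<close> ne by (auto simp: ring_def sw_def Let_def fun_eq_iff)
      then show ?thesis using \<open>x s = Some p\<close> by simp
    next
      case False
      then show ?thesis using Some \<open>x s = Some p\<close> by (simp add: ring_def Let_def)
    qed
  qed
qed

lemma ring_card: "card {t. ring n s x t = v} = card {t. x t = v}"
  using ring_cases[of n s x] card_sw[of x s "succ n s" v] by metis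

lemma ring_vals: "ring n s x t \<in> {x t, x s, x (succ n s)}"
  by (auto simp: ring_def Let_def split: option.splits)

lemma site_ok_succ: "1 \<le> n \<Longrightarrow> site_ok n s \<Longrightarrow> site_ok n (succ n s)"
  by (cases s) auto

lemma ring_ok: "1 \<le> n \<Longrightarrow> \<forall>s. x s \<noteq> None \<longrightarrow> site_ok n s \<Longrightarrow> ring n s0 x t \<noteq> None \<Longrightarrow> site_ok n t"
  using ring_cases[of n s0 x] succ_neq[of n s0]
proof -
  assume a: "1 \<le> n" "\<forall>s. x s \<noteq> None \<longrightarrow> site_ok n s" "ring n s0 x t \<noteq> None"
  consider "ring n s0 x = x" | "x s0 \<noteq> None" "ring n s0 x = (\<lambda>t. x (sw s0 (succ n s0) t))"
    using ring_cases[of n s0 x] by blast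
  then show ?thesis
  proof cases
    case 1 then show ?thesis using a by simp
  next
    case 2
    then have ok0: "site_ok n s0" using a by blast
    show ?thesis
    proof (cases "t = s0")
      case True then show ?thesis using ok0 by simp
    next
      case False
      show ?thesis
      proof (cases "t = succ n s0")
        case True then show ?thesis using ok0 site_ok_succ a(1) by simp
      next
        case False
        then have "x t \<noteq> None" using 2 a(3) \<open>t \<noteq> s0\<close> by (simp add: sw_def)
        then show ?thesis using a by blast
      qed
    qed
  qed
qed



lemma sites_eq: "{s. site_ok n s} = U ` {1..n} \<union> L ` {1..n}"
  by (auto elim: site_ok.elims)

lemma finite_sites: "finite {s. site_ok n s}"
  unfolding sites_eq by simp

definition cols :: "nat \<Rightarrow> state \<Rightarrow> bool" where
  "cols n x = (\<forall>j\<in>{1..n}. x (U j) = None \<or> x (L j) = None)"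

lemma col_mid:
  assumes "cols n x" "0 < j" "j < n"
  shows "cols n (ring n (U (j + 1)) (ring n (L j) x))"
proof -
  have s1: "succ n (L j) = L (j+1)" using assms by simp
  have s2: "succ n (U (j+1)) = U j" using assms by simp
  have cj: "x (U j) = None \<or> x (L j) = None" and cj1: "x (U (j+1)) = None \<or> x (L (j+1)) = None"
    using assms unfolding cols_def by auto
  show ?thesis unfolding cols_def
  proof
    fix c assume c: "c \<in> {1..n}"
    show "ring n (U (j + 1)) (ring n (L j) x) (U c) = None \<or> ring n (U (j + 1)) (ring n (L j) x) (L c) = None"
    proof (cases "c = j \<or> c = j + 1")
      case True
      then show ?thesis using cj cj1 unfolding ring_def s1 s2 Let_def
        by (auto split: option.splits)
    next
      case False
      then show ?thesis using assms c unfolding ring_def s1 s2 Let_def cols_def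
        by (auto split: option.splits)
    qed
  qed
qed

lemma typemap_same:
  assumes "1 \<le> d0" "d0 \<le> d" "typemap n J d0 = typemap n J d" "typemap n J d \<noteq> None" "J \<subseteq> K"
  shows "typemap n K d0 = typemap n K d"
proof -
  have A: "{j \<in> {1..<d0}. j \<notin> J} = {j \<in> {1..<d}. j \<notin> J}"
  proof (rule card_subset_eq)
    show "finite {j \<in> {1..<d}. j \<notin> J}" by simp
    show "{j \<in> {1..<d0}. j \<notin> J} \<subseteq> {j \<in> {1..<d}. j \<notin> J}" using assms by auto
    show "card {j \<in> {1..<d0}. j \<notin> J} = card {j \<in> {1..<d}. j \<notin> J}"
      using assms(3,4) by (auto simp: typemap_def split: if_splits)
  qed
  have inJ: "\<And>j. d0 \<le> j \<Longrightarrow> j < d \<Longrightarrow> j \<in> J"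
  proof (rule ccontr)
    fix j assume "d0 \<le> j" "j < d" "j \<notin> J"
    then have "j \<in> {j \<in> {1..<d}. j \<notin> J}" using assms(1) by auto
    then have "j \<in> {j \<in> {1..<d0}. j \<notin> J}" using A by simp
    then show False using \<open>d0 \<le> j\<close> by simp
  qed
  have B: "{j \<in> {1..<d0}. j \<notin> K} = {j \<in> {1..<d}. j \<notin> K}"
    using inJ assms(2,5) by (auto simp: subset_iff) (meson not_le subsetD)
  have C: "({d0..n} \<subseteq> K) = ({d..n} \<subseteq> K)"
  proof
    assume "{d..n} \<subseteq> K"
    then show "{d0..n} \<subseteq> K" using inJ assms(5) by (auto simp: subset_iff) (meson not_le)
  qed (use assms(2) in auto)
  show ?thesis unfolding typemap_def B C by simp
qed

lemma typemap_G:
  assumes "d \<in> {1..n}"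
  shows "typemap n (insert i J) d = G n J i (typemap n J d)"
proof (cases "typemap n J d")
  case None
  then show ?thesis by (auto simp: typemap_def G_def split: if_splits)
next
  case (Some c)
  define d0 where "d0 = (SOME d. d \<in> {1..n} \<and> typemap n J d = Some c)"
  have d0: "d0 \<in> {1..n} \<and> typemap n J d0 = Some c"
    unfolding d0_def by (rule someI_ex) (use assms Some in blast)
  have G: "G n J i (typemap n J d) = typemap n (insert i J) d0"
    by (simp add: G_def Some d0_def)
  have "typemap n (insert i J) d0 = typemap n (insert i J) d"
  proof (cases "d0 \<le> d")
    case True then show ?thesis using typemap_same[of d0 d n J "insert i J"] d0 Some by auto
  next
    case False then show ?thesis using typemap_same[of d d0 n J "insert i J"] d0 Some assms by fastforce
  qed
  then show ?thesis using G by simp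
qed



lemma ring_cols_edge:
  assumes "cols n x" "s = U 1 \<or> s = L n" "1 \<le> n"
  shows "cols n (ring n s x)"
proof -
  consider "ring n s x = x" | "ring n s x = (\<lambda>t. x (sw s (succ n s) t))"
    using ring_cases[of n s x] by blast
  then show ?thesis
  proof cases
    case 1 then show ?thesis using assms by simp
  next
    case 2
    have c1: "x (U 1) = None \<or> x (L 1) = None" "x (U n) = None \<or> x (L n) = None"
      using assms(1,3) unfolding cols_def by auto
    have "cols n (\<lambda>t. x (sw s (succ n s) t))" using assms(2)
    proof
      assume s: "s = U 1"
      have sn: "succ n (U 1) = L 1" by simp
      show ?thesis unfolding cols_def s sn
      proof
        fix c assume c: "c \<in> {1..n}"
        show "x (sw (U 1) (L 1) (U c)) = None \<or> x (sw (U 1) (L 1) (L c)) = None"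
        proof (cases "c = 1")
          case True then show ?thesis using c1(1) by (auto simp: sw_def)
        next
          case False then show ?thesis using assms(1) c unfolding cols_def by (auto simp: sw_def)
        qed
      qed
    next
      assume s: "s = L n"
      have sn: "succ n (L n) = U n" by simp
      show ?thesis unfolding cols_def s sn
      proof
        fix c assume c: "c \<in> {1..n}"
        show "x (sw (L n) (U n) (U c)) = None \<or> x (sw (L n) (U n) (L c)) = None"
        proof (cases "c = n")
          case True then show ?thesis using c1(2) by (auto simp: sw_def)
        next
          case False then show ?thesis using assms(1) c unfolding cols_def by (auto simp: sw_def)
        qed
      qed
    qed
    then show ?thesis using 2 by simp
  qed
qed

lemma ring_okall: "1 \<le> n \<Longrightarrow> \<forall>s. x s \<noteq> None \<longrightarrow> site_ok n s \<Longrightarrow> \<forall>t. ring n s0 x t \<noteq> None \<longrightarrow> site_ok n t"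
  using ring_ok by blast

lemma sigma_Omega:
  assumes "2 \<le> n" "j \<le> n" "x \<in> Omega n J"
  shows "sigma n j x \<in> Omega n J"
proof -
  have ok: "\<forall>s. x s \<noteq> None \<longrightarrow> site_ok n s" and c: "cols n x" and cnt: "\<forall>k. card {s. x s = Some k} = mJ n J k"
    using assms(3) by (auto simp: Omega_def cols_def)
  have n1: "1 \<le> n" using assms by simp
  have "\<forall>s. sigma n j x s \<noteq> None \<longrightarrow> site_ok n s"
    unfolding sigma_def using ring_okall[OF n1 ok] ring_okall[OF n1 ring_okall[OF n1 ok]] by simp
  moreover have "cols n (sigma n j x)"
    unfolding sigma_def using ring_cols_edge[OF c _ n1] col_mid[OF c] assms(2) by simp
  moreover have "\<forall>k. card {s. sigma n j x s = Some k} = mJ n J k"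
    unfolding sigma_def using cnt ring_card by simp
  ultimately show ?thesis by (simp add: Omega_def cols_def)
qed

lemma finite_fun_set:
  "finite {x :: state. (\<forall>s. x s \<noteq> None \<longrightarrow> site_ok n s) \<and> (\<forall>s. x s \<in> insert None (Some ` {..m}))}"
proof -
  let ?D = "{s. site_ok n s}"
  let ?A = "{x :: state. (\<forall>s. x s \<noteq> None \<longrightarrow> site_ok n s) \<and> (\<forall>s. x s \<in> insert None (Some ` {..m}))}"
  have "?A \<subseteq> {x. \<forall>s. (s \<in> ?D \<longrightarrow> x s \<in> insert None (Some ` {..m})) \<and> (s \<notin> ?D \<longrightarrow> x s = None)}"
    by auto
  moreover have "finite {x. \<forall>s. (s \<in> ?D \<longrightarrow> x s \<in> insert None (Some ` {..m})) \<and> (s \<notin> ?D \<longrightarrow> x s = None)}"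
    by (rule finite_set_of_finite_funs[OF finite_sites]) simp
  ultimately show ?thesis by (rule finite_subset)
qed

lemma Omega_vals:
  assumes "x \<in> Omega n J" "x s = Some k"
  shows "k \<in> VV n J"
proof -
  have ok: "\<forall>s. x s \<noteq> None \<longrightarrow> site_ok n s" and cnt: "card {s. x s = Some k} = mJ n J k"
    using assms(1) by (auto simp: Omega_def)
  have "finite {s. x s = Some k}"
    by (rule finite_subset[OF _ finite_sites]) (use ok in auto)
  then have "card {s. x s = Some k} > 0" using assms(2) card_gt_0_iff by blast
  then have "mJ n J k > 0" using cnt by simp
  then show ?thesis unfolding mJ_def card_gt_0_iff VV_def by blast
qed

lemma VV_le: "k \<in> VV n J \<Longrightarrow> k \<le> n"
proof -
  assume "k \<in> VV n J"
  then obtain d where d: "d \<in> {1..n}" "typemap n J d = Some k" unfolding VV_def by blast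
  then have "k = 1 + card {j \<in> {1..<d}. j \<notin> J}" by (auto simp: typemap_def split: if_splits)
  also have "\<dots> \<le> 1 + card {1..<d}" by (intro add_left_mono card_mono) auto
  finally show ?thesis using d by simp
qed

lemma finite_Omega: "finite (Omega n J)"
proof -
  have "Omega n J \<subseteq> {x :: state. (\<forall>s. x s \<noteq> None \<longrightarrow> site_ok n s) \<and> (\<forall>s. x s \<in> insert None (Some ` {..n}))}"
  proof (rule subsetI, simp only: mem_Collect_eq, intro conjI allI)
    fix x s assume x: "x \<in> Omega n J"
    then show "x s \<noteq> None \<longrightarrow> site_ok n s" by (auto simp: Omega_def)
    show "x s \<in> insert None (Some ` {..n})"
    proof (cases "x s")
      case (Some k) then show ?thesis using Omega_vals[OF x Some] VV_le by auto
    qed simp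
  qed
  then show ?thesis by (rule finite_subset[OF _ finite_fun_set])
qed

lemma ring_vals_pres: "\<forall>s. x s \<in> A \<Longrightarrow> \<forall>s. ring n s0 x s \<in> A"
  by (metis empty_iff insertE ring_vals)

lemma sigma_phi:
  assumes "x \<in> Omega n J"
  shows "sigma n j (phi n J i x) = phi n J i (sigma n j x)"
proof -
  have vals: "\<forall>s. x s \<in> insert None (Some ` VV n J)"
    using Omega_vals[OF assms] by (metis image_eqI insertCI not_Some_eq)
  have g0: "G n J i None = None" by (simp add: G_def)
  note rc = ring_comm[of "G n J i", OF g0 _ G_mono]
  have vals2: "\<forall>s. ring n (L j) x s \<in> insert None (Some ` VV n J)"
    by (rule ring_vals_pres[OF vals])
  show ?thesis unfolding phi_eq sigma_def
    using rc[OF vals] rc[OF vals2] by simp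
qed



lemma VV_finite: "finite (VV n J)"
  using VV_le by (meson finite_atMost finite_subset subsetI atMost_iff)

lemma phi_Omega:
  assumes x: "x \<in> Omega n J"
  shows "phi n J i x \<in> Omega n (insert i J)"
proof -
  have ok: "\<forall>s. x s \<noteq> None \<longrightarrow> site_ok n s" and c: "cols n x" and cnt: "\<forall>k. card {s. x s = Some k} = mJ n J k"
    using x by (auto simp: Omega_def cols_def)
  have g0: "G n J i None = None" by (simp add: G_def)
  have ok': "\<forall>s. phi n J i x s \<noteq> None \<longrightarrow> site_ok n s"
    using ok g0 unfolding phi_eq by (metis)
  have c': "cols n (phi n J i x)"
    using c g0 unfolding phi_eq cols_def by (metis)
  have cnt': "card {s. phi n J i x s = Some k} = mJ n (insert i J) k" for k
  proof -
    define C where "C = {c \<in> VV n J. G n J i (Some c) = Some k}"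
    have fC: "finite C" unfolding C_def using VV_finite by simp
    have e1: "{s. phi n J i x s = Some k} = (\<Union>c\<in>C. {s. x s = Some c})"
    proof (rule set_eqI)
      fix s
      show "s \<in> {s. phi n J i x s = Some k} \<longleftrightarrow> s \<in> (\<Union>c\<in>C. {s. x s = Some c})"
      proof (cases "x s")
        case None then show ?thesis using g0 by (simp add: phi_eq)
      next
        case (Some c)
        then have "c \<in> VV n J" using Omega_vals[OF x] by blast
        then show ?thesis using Some by (auto simp: phi_eq C_def)
      qed
    qed
    have "card {s. phi n J i x s = Some k} = (\<Sum>c\<in>C. card {s. x s = Some c})"
      unfolding e1
    proof (rule card_UN_disjoint[OF fC])
      show "\<forall>c\<in>C. finite {s. x s = Some c}"
        using ok by (auto intro: finite_subset[OF _ finite_sites])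
    qed auto
    also have "\<dots> = (\<Sum>c\<in>C. mJ n J c)" using cnt by simp
    also have "\<dots> = card (\<Union>c\<in>C. {d \<in> {1..n}. typemap n J d = Some c})"
      unfolding mJ_def by (rule card_UN_disjoint[OF fC, symmetric]) auto
    also have "(\<Union>c\<in>C. {d \<in> {1..n}. typemap n J d = Some c}) = {d \<in> {1..n}. typemap n (insert i J) d = Some k}"
    proof (rule set_eqI)
      fix d
      show "d \<in> (\<Union>c\<in>C. {d \<in> {1..n}. typemap n J d = Some c}) \<longleftrightarrow> d \<in> {d \<in> {1..n}. typemap n (insert i J) d = Some k}"
      proof (cases "d \<in> {1..n}")
        case True
        note tg = typemap_G[OF True, of i J]
        show ?thesis
        proof (cases "typemap n J d")
          case None then show ?thesis using tg g0 by auto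
        next
          case (Some c)
          then have "c \<in> VV n J" unfolding VV_def using True by blast
          then show ?thesis using tg Some True by (auto simp: C_def)
        qed
      qed auto
    qed
    finally show ?thesis unfolding mJ_def .
  qed
  show ?thesis using ok' c' cnt' unfolding Omega_def cols_def by blast
qed



lemma sum_rate:
  assumes "finite A"
  shows "(\<Sum>y\<in>A. rate n x y) = (\<Sum>j\<in>{0..n}. if sigma n j x \<in> A then wt n j else 0)"
  unfolding rate_def
  by (subst sum.swap) (simp add: sum.delta'[OF assms])

lemma gen_diag:
  assumes "2 \<le> n" "x \<in> Omega n K"
  shows "gen n (Omega n K) x x = - (\<Sum>j\<in>{0..n}. if sigma n j x \<noteq> x then wt n j else 0)"
proof -
  have "(\<Sum>z\<in>Omega n K - {x}. rate n x z) = (\<Sum>j\<in>{0..n}. if sigma n j x \<in> Omega n K - {x} then wt n j else 0)"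
    by (rule sum_rate) (simp add: finite_Omega)
  also have "\<dots> = (\<Sum>j\<in>{0..n}. if sigma n j x \<noteq> x then wt n j else 0)"
    by (rule sum.cong) (use sigma_Omega[OF assms(1) _ assms(2)] in auto)
  finally show ?thesis by (simp add: gen_def)
qed

lemma gen_lump:
  assumes n: "2 \<le> n" and x: "x \<in> Omega n J"
  shows "(\<Sum>y\<in>{y \<in> Omega n J. phi n J i y = y'}. gen n (Omega n J) x y)
         = gen n (Omega n (insert i J)) (phi n J i x) y'"
proof -
  let ?S = "Omega n J" and ?S' = "Omega n (insert i J)" and ?F = "{y \<in> Omega n J. phi n J i y = y'}"
  have fF: "finite ?F" using finite_Omega by simp
  have sx: "\<And>j. j \<in> {0..n} \<Longrightarrow> sigma n j x \<in> ?S" using sigma_Omega[OF n _ x] by simp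
  have px: "phi n J i x \<in> ?S'" by (rule phi_Omega[OF x])
  have sp: "\<And>j. sigma n j (phi n J i x) = phi n J i (sigma n j x)" by (rule sigma_phi[OF x])
  show ?thesis
  proof (cases "phi n J i x = y'")
    case False
    then have "x \<notin> ?F" by auto
    then have "(\<Sum>y\<in>?F. gen n ?S x y) = (\<Sum>y\<in>?F. rate n x y)"
      by (intro sum.cong) (auto simp: gen_def)
    also have "\<dots> = (\<Sum>j\<in>{0..n}. if sigma n j x \<in> ?F then wt n j else 0)"
      by (rule sum_rate[OF fF])
    also have "\<dots> = (\<Sum>j\<in>{0..n}. if sigma n j (phi n J i x) = y' then wt n j else 0)"
      by (rule sum.cong) (use sx sp in auto)
    also have "\<dots> = gen n ?S' (phi n J i x) y'"
      using False by (simp add: gen_def rate_def)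
    finally show ?thesis .
  next
    case True
    then have xF: "x \<in> ?F" using x by auto
    have "(\<Sum>y\<in>?F. gen n ?S x y) = gen n ?S x x + (\<Sum>y\<in>?F - {x}. gen n ?S x y)"
      using sum.remove[OF fF xF] by simp
    also have "(\<Sum>y\<in>?F - {x}. gen n ?S x y) = (\<Sum>y\<in>?F - {x}. rate n x y)"
      by (intro sum.cong) (auto simp: gen_def)
    also have "\<dots> = (\<Sum>j\<in>{0..n}. if sigma n j x \<in> ?F - {x} then wt n j else 0)"
      by (rule sum_rate) (use fF in simp)
    also have "gen n ?S x x = - (\<Sum>j\<in>{0..n}. if sigma n j x \<noteq> x then wt n j else 0)"
      by (rule gen_diag[OF n x])
    also have "- (\<Sum>j\<in>{0..n}. if sigma n j x \<noteq> x then wt n j else 0) + (\<Sum>j\<in>{0..n}. if sigma n j x \<in> ?F - {x} then wt n j else 0)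
        = - (\<Sum>j\<in>{0..n}. if sigma n j (phi n J i x) \<noteq> phi n J i x then wt n j else 0)"
    proof -
      have "(\<Sum>j\<in>{0..n}. if sigma n j x \<in> ?F - {x} then wt n j else 0) - (\<Sum>j\<in>{0..n}. if sigma n j x \<noteq> x then wt n j else 0)
          = (\<Sum>j\<in>{0..n}. (if sigma n j x \<in> ?F - {x} then wt n j else 0) - (if sigma n j x \<noteq> x then wt n j else 0))"
        by (simp add: sum_subtractf)
      also have "\<dots> = (\<Sum>j\<in>{0..n}. - (if sigma n j (phi n J i x) \<noteq> phi n J i x then wt n j else 0))"
        by (rule sum.cong) (use sx sp True in auto)
      finally show ?thesis by (simp add: sum_negf)
    qed
    also have "\<dots> = gen n ?S' (phi n J i x) (phi n J i x)"
      by (rule gen_diag[OF n px, symmetric])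
    finally show ?thesis using True by simp
  qed
qed



lemma matpow_lump:
  assumes n: "2 \<le> n" and x: "x \<in> Omega n J"
  shows "(\<Sum>y\<in>{y \<in> Omega n J. phi n J i y = y'}. matpow (Omega n J) (gen n (Omega n J)) k x y)
         = matpow (Omega n (insert i J)) (gen n (Omega n (insert i J))) k (phi n J i x) y'"
  using x
proof (induction k arbitrary: x y')
  case 0
  have "finite {y \<in> Omega n J. phi n J i y = y'}" using finite_Omega by simp
  then show ?case using 0 by (simp add: sum.delta)
next
  case (Suc k)
  let ?S = "Omega n J" and ?S' = "Omega n (insert i J)" and ?Q = "gen n (Omega n J)" and ?Q' = "gen n (Omega n (insert i J))"
  let ?F = "\<lambda>y'. {y \<in> ?S. phi n J i y = y'}"
  have fS: "finite ?S" "finite ?S'" by (simp_all add: finite_Omega)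
  have "(\<Sum>y\<in>?F y'. matpow ?S ?Q (Suc k) x y) = (\<Sum>y\<in>?F y'. \<Sum>z\<in>?S. ?Q x z * matpow ?S ?Q k z y)"
    by simp
  also have "\<dots> = (\<Sum>z\<in>?S. ?Q x z * (\<Sum>y\<in>?F y'. matpow ?S ?Q k z y))"
    by (subst sum.swap) (simp add: sum_distrib_left)
  also have "\<dots> = (\<Sum>z\<in>?S. ?Q x z * matpow ?S' ?Q' k (phi n J i z) y')"
    by (rule sum.cong) (simp_all add: Suc.IH)
  also have "\<dots> = (\<Sum>z'\<in>?S'. \<Sum>z\<in>?F z'. ?Q x z * matpow ?S' ?Q' k (phi n J i z) y')"
    by (rule sum.group[OF fS, symmetric]) (use phi_Omega in blast)
  also have "\<dots> = (\<Sum>z'\<in>?S'. (\<Sum>z\<in>?F z'. ?Q x z) * matpow ?S' ?Q' k z' y')"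
    by (simp add: sum_distrib_right)
  also have "\<dots> = (\<Sum>z'\<in>?S'. ?Q' (phi n J i x) z' * matpow ?S' ?Q' k z' y')"
    by (rule sum.cong) (simp_all add: gen_lump[OF n Suc.prems])
  also have "\<dots> = matpow ?S' ?Q' (Suc k) (phi n J i x) y'" by simp
  finally show ?case .
qed

lemma matpow_bound:
  assumes "finite S" "\<And>x z. \<bar>Q x z\<bar> \<le> B" "0 \<le> B"
  shows "\<bar>matpow S Q k x y\<bar> \<le> (real (card S) * B) ^ k"
proof (induction k arbitrary: x)
  case 0 then show ?case by simp
next
  case (Suc k)
  have "\<bar>matpow S Q (Suc k) x y\<bar> \<le> (\<Sum>z\<in>S. \<bar>Q x z * matpow S Q k z y\<bar>)"
    using sum_abs[of "\<lambda>z. Q x z * matpow S Q k z y" S] by simp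
  also have "\<dots> \<le> (\<Sum>z\<in>S. B * (real (card S) * B) ^ k)"
    by (rule sum_mono) (simp add: abs_mult mult_mono assms Suc.IH)
  also have "\<dots> = (real (card S) * B) ^ Suc k" by simp
  finally show ?case .
qed

lemma summable_trans:
  assumes "finite S" "\<And>x z. \<bar>Q x z\<bar> \<le> B" "0 \<le> B"
  shows "summable (\<lambda>k. t ^ k / fact k * matpow S Q k x y)"
proof (rule summable_comparison_test)
  let ?C = "real (card S) * B"
  show "summable (\<lambda>k. inverse (fact k) * (\<bar>t\<bar> * ?C) ^ k)" by (rule summable_exp)
  show "\<exists>N. \<forall>k\<ge>N. norm (t ^ k / fact k * matpow S Q k x y) \<le> inverse (fact k) * (\<bar>t\<bar> * ?C) ^ k"
  proof (intro exI allI impI)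
    fix k :: nat
    have "norm (t ^ k / fact k * matpow S Q k x y) = \<bar>t\<bar> ^ k / fact k * \<bar>matpow S Q k x y\<bar>"
      by (simp add: abs_mult power_abs)
    also have "\<dots> \<le> \<bar>t\<bar> ^ k / fact k * ?C ^ k"
      by (rule mult_left_mono[OF matpow_bound[OF assms]]) simp
    also have "\<dots> = inverse (fact k) * (\<bar>t\<bar> * ?C) ^ k"
      by (simp add: power_mult_distrib divide_inverse)
    finally show "norm (t ^ k / fact k * matpow S Q k x y) \<le> inverse (fact k) * (\<bar>t\<bar> * ?C) ^ k" .
  qed
qed

lemma rate_bound: "0 \<le> rate n x y \<and> rate n x y \<le> (\<Sum>j\<in>{0..n}. wt n j)"
  unfolding rate_def by (auto intro!: sum_nonneg sum_mono simp: wt_def)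

lemma gen_bound:
  assumes "finite S"
  shows "\<bar>gen n S x z\<bar> \<le> (real (card S) + 1) * (\<Sum>j\<in>{0..n}. wt n j)"
proof -
  let ?R = "\<Sum>j\<in>{0..n}. wt n j"
  have R0: "0 \<le> ?R" by (auto intro!: sum_nonneg simp: wt_def)
  show ?thesis
  proof (cases "x = z")
    case True
    have "(\<Sum>w\<in>S - {x}. rate n x w) \<le> (\<Sum>w\<in>S - {x}. ?R)" by (rule sum_mono) (use rate_bound in blast)
    also have "\<dots> \<le> real (card S) * ?R"
      using R0 card_Diff1_le[of S x] assms by (simp add: mult_right_mono)
    finally have "(\<Sum>w\<in>S - {x}. rate n x w) \<le> real (card S) * ?R" .
    moreover have "0 \<le> (\<Sum>w\<in>S - {x}. rate n x w)" by (rule sum_nonneg) (use rate_bound in blast)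
    ultimately show ?thesis using True R0 by (simp add: gen_def algebra_simps)
  next
    case False
    have "\<bar>gen n S x z\<bar> = rate n x z" using False rate_bound[of n x z] by (simp add: gen_def)
    also have "\<dots> \<le> 1 * ?R" using rate_bound[of n x z] by simp
    also have "\<dots> \<le> (real (card S) + 1) * ?R" by (rule mult_right_mono[OF _ R0]) simp
    finally show ?thesis .
  qed
qed

lemma summable_trans_gen:
  "summable (\<lambda>k. t ^ k / fact k * matpow (Omega n K) (gen n (Omega n K)) k x y)"
  by (rule summable_trans[OF finite_Omega gen_bound[OF finite_Omega]])
     (auto intro!: sum_nonneg mult_nonneg_nonneg simp: wt_def)

lemma trans_lump:
  assumes n: "2 \<le> n" and x: "x \<in> Omega n J"
  shows "(\<Sum>y\<in>{y \<in> Omega n J. phi n J i y = y'}. trans (Omega n J) (gen n (Omega n J)) t x y)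
         = trans (Omega n (insert i J)) (gen n (Omega n (insert i J))) t (phi n J i x) y'"
proof -
  let ?F = "{y \<in> Omega n J. phi n J i y = y'}"
  have "(\<Sum>y\<in>?F. trans (Omega n J) (gen n (Omega n J)) t x y)
      = (\<Sum>k. \<Sum>y\<in>?F. t ^ k / fact k * matpow (Omega n J) (gen n (Omega n J)) k x y)"
    unfolding trans_def by (rule suminf_sum[symmetric]) (rule summable_trans_gen)
  also have "\<dots> = (\<Sum>k. t ^ k / fact k * matpow (Omega n (insert i J)) (gen n (Omega n (insert i J))) k (phi n J i x) y')"
    by (rule suminf_cong) (subst sum_distrib_left[symmetric], subst matpow_lump[OF n x], rule refl)
  finally show ?thesis by (simp add: trans_def)
qed



lemma claim:
  fixes p :: "state \<Rightarrow> real" and D :: "nat \<Rightarrow> real" and y' :: "nat \<Rightarrow> state"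
  assumes n: "2 \<le> n"
  shows "(\<Sum>x\<in>PiE {..m} (\<lambda>j. {z \<in> Omega n J. phi n J i z = y' j}).
            p (x 0) * (\<Prod>j<m. trans (Omega n J) (gen n (Omega n J)) (D j) (x j) (x (Suc j))))
       = (\<Sum>x\<in>PiE {..0} (\<lambda>j. {z \<in> Omega n J. phi n J i z = y' j}). p (x 0))
         * (\<Prod>j<m. trans (Omega n (insert i J)) (gen n (Omega n (insert i J))) (D j) (y' j) (y' (Suc j)))"
proof (induction m)
  case 0 then show ?case by simp
next
  case (Suc m)
  let ?fib = "\<lambda>j. {z \<in> Omega n J. phi n J i z = y' j}"
  let ?T = "trans (Omega n J) (gen n (Omega n J))"
  let ?T' = "trans (Omega n (insert i J)) (gen n (Omega n (insert i J)))"
  let ?f = "\<lambda>m x. p (x 0) * (\<Prod>j<m. ?T (D j) (x j) (x (Suc j)))"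
  have fin: "finite (?fib (Suc m))" by (simp add: finite_Omega)
  have PE: "PiE {..Suc m} ?fib = (\<lambda>(y, g). g(Suc m := y)) ` (?fib (Suc m) \<times> PiE {..m} ?fib)"
    unfolding atMost_Suc by (rule PiE_insert_eq)
  have inj: "inj_on (\<lambda>(y, g). g(Suc m := y)) (?fib (Suc m) \<times> PiE {..m} ?fib)"
    by (rule inj_combinator) simp
  have "(\<Sum>x\<in>PiE {..Suc m} ?fib. ?f (Suc m) x)
      = (\<Sum>(z, g)\<in>?fib (Suc m) \<times> PiE {..m} ?fib. ?f (Suc m) (g(Suc m := z)))"
    unfolding PE by (subst sum.reindex[OF inj]) (simp add: case_prod_unfold)
  also have "\<dots> = (\<Sum>z\<in>?fib (Suc m). \<Sum>g\<in>PiE {..m} ?fib. ?f (Suc m) (g(Suc m := z)))"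
    by (rule sum.cartesian_product[symmetric])
  also have "\<dots> = (\<Sum>z\<in>?fib (Suc m). \<Sum>g\<in>PiE {..m} ?fib. ?f m g * ?T (D m) (g m) z)"
  proof (intro sum.cong refl)
    fix z g
    have "(\<Prod>j<m. ?T (D j) ((g(Suc m := z)) j) ((g(Suc m := z)) (Suc j))) = (\<Prod>j<m. ?T (D j) (g j) (g (Suc j)))"
      by (rule prod.cong) auto
    then show "?f (Suc m) (g(Suc m := z)) = ?f m g * ?T (D m) (g m) z"
      by (simp add: mult.assoc)
  qed
  also have "\<dots> = (\<Sum>g\<in>PiE {..m} ?fib. ?f m g * (\<Sum>z\<in>?fib (Suc m). ?T (D m) (g m) z))"
    by (subst sum.swap) (simp add: sum_distrib_left)
  also have "\<dots> = (\<Sum>g\<in>PiE {..m} ?fib. ?f m g * ?T' (D m) (y' m) (y' (Suc m)))"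
  proof (intro sum.cong refl)
    fix g assume g: "g \<in> PiE {..m} ?fib"
    then have gm: "g m \<in> ?fib m" by (auto dest: PiE_mem)
    have "(\<Sum>z\<in>?fib (Suc m). ?T (D m) (g m) z) = ?T' (D m) (phi n J i (g m)) (y' (Suc m))"
      by (rule trans_lump[OF n]) (use gm in simp)
    also have "\<dots> = ?T' (D m) (y' m) (y' (Suc m))" using gm by simp
    finally show "?f m g * (\<Sum>z\<in>?fib (Suc m). ?T (D m) (g m) z) = ?f m g * ?T' (D m) (y' m) (y' (Suc m))"
      by simp
  qed
  also have "\<dots> = (\<Sum>g\<in>PiE {..m} ?fib. ?f m g) * ?T' (D m) (y' m) (y' (Suc m))"
    by (simp add: sum_distrib_right)
  also have "\<dots> = (\<Sum>x\<in>PiE {..0} ?fib. p (x 0)) * (\<Prod>j<Suc m. ?T' (D j) (y' j) (y' (Suc j)))"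
    using Suc.IH by (simp add: mult.assoc)
  finally show ?case .
qed



lemma event_meas:
  fixes m :: nat
  assumes "\<And>j. j \<le> m \<Longrightarrow> {\<omega> \<in> space M. X (t j) \<omega> = x j} \<in> sets M"
  shows "{\<omega> \<in> space M. \<forall>j\<le>m. X (t j) \<omega> = x j} \<in> sets M"
proof -
  have eq: "{\<omega> \<in> space M. \<forall>j\<le>m. X (t j) \<omega> = x j} = (\<Inter>j\<in>{..m}. {\<omega> \<in> space M. X (t j) \<omega> = x j})"
    by blast
  have "(\<Inter>j\<in>{..m}. {\<omega> \<in> space M. X (t j) \<omega> = x j}) \<in> sets M"
    by (rule sets.finite_INT) (simp_all add: assms)
  then show ?thesis unfolding eq .
qed

theorem proposition1:
  fixes n i :: nat and J :: "nat set" and M :: "'w measure" and X :: "real \<Rightarrow> 'w \<Rightarrow> state"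
  assumes "n \<ge> 2" and "J \<subseteq> {1..n}" and "i \<in> {1..n} - J"
    and "prob_space M"
    and "is_ctmc M (Omega n J) (gen n (Omega n J)) X"
  shows "is_ctmc M (Omega n (insert i J)) (gen n (Omega n (insert i J)))
           (\<lambda>t \<omega>. phi n J i (X t \<omega>))"
proof -
  interpret P: prob_space M by fact
  note n = assms(1)
  let ?S = "Omega n J" and ?S' = "Omega n (insert i J)"
  let ?T = "trans ?S (gen n ?S)" and ?T' = "trans ?S' (gen n ?S')"
  let ?fib = "\<lambda>a. {z \<in> ?S. phi n J i z = a}"
  note C = assms(5)[unfolded is_ctmc_def]
  have Xin: "\<And>t \<omega>. 0 \<le> t \<Longrightarrow> \<omega> \<in> space M \<Longrightarrow> X t \<omega> \<in> ?S"
    by (rule C[THEN conjunct1, rule_format])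
  have Xmeas: "\<And>t x. 0 \<le> t \<Longrightarrow> {\<omega> \<in> space M. X t \<omega> = x} \<in> sets M"
    by (rule C[THEN conjunct2, THEN conjunct1, rule_format])
  have H3all: "\<forall>(k::nat) (t::nat \<Rightarrow> real) (x::nat \<Rightarrow> state). 0 \<le> t 0 \<longrightarrow> (\<forall>j<k. t j < t (Suc j)) \<longrightarrow>
        measure M {\<omega> \<in> space M. \<forall>j\<le>k. X (t j) \<omega> = x j}
          = measure M {\<omega> \<in> space M. X (t 0) \<omega> = x 0} * (\<Prod>j<k. ?T (t (Suc j) - t j) (x j) (x (Suc j)))"
    by (rule C[THEN conjunct2, THEN conjunct2])
  have H3: "\<And>k t x. 0 \<le> t 0 \<Longrightarrow> (\<forall>j<k. t j < t (Suc j)) \<Longrightarrow>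
        measure M {\<omega> \<in> space M. \<forall>j\<le>k. X (t j) \<omega> = x j}
          = measure M {\<omega> \<in> space M. X (t 0) \<omega> = x 0} * (\<Prod>j<k. ?T (t (Suc j) - t j) (x j) (x (Suc j)))"
  proof -
    fix k t x
    assume a: "0 \<le> (t::nat\<Rightarrow>real) 0" "\<forall>j<k. t j < t (Suc j)"
    show "measure M {\<omega> \<in> space M. \<forall>j\<le>k. X (t j) \<omega> = x j}
          = measure M {\<omega> \<in> space M. X (t 0) \<omega> = x 0} * (\<Prod>j<k. ?T (t (Suc j) - t j) (x j) (x (Suc j)))"
      using H3all[THEN spec[of _ k], THEN spec[of _ t], THEN spec[of _ x]] a by blast
  qed
  have fibfin: "\<And>a. finite (?fib a)" by (simp add: finite_Omega)
  have decomp: "measure M {\<omega> \<in> space M. \<forall>j\<le>m. phi n J i (X (t j) \<omega>) = y' j}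
      = (\<Sum>x\<in>PiE {..m} (\<lambda>j. ?fib (y' j)). measure M {\<omega> \<in> space M. \<forall>j\<le>m. X (t j) \<omega> = x j})"
    if tpos: "\<And>j. j \<le> m \<Longrightarrow> 0 \<le> t j" for m :: nat and t y'
  proof -
    let ?F = "PiE {..m} (\<lambda>j. ?fib (y' j))"
    let ?E = "\<lambda>x. {\<omega> \<in> space M. \<forall>j\<le>m. X (t j) \<omega> = x j}"
    have eq: "{\<omega> \<in> space M. \<forall>j\<le>m. phi n J i (X (t j) \<omega>) = y' j} = (\<Union>x\<in>?F. ?E x)"
    proof (rule set_eqI, rule iffI)
      fix \<omega> assume w: "\<omega> \<in> {\<omega> \<in> space M. \<forall>j\<le>m. phi n J i (X (t j) \<omega>) = y' j}"
      let ?x = "restrict (\<lambda>j. X (t j) \<omega>) {..m}"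
      have "?x \<in> ?F" using w Xin tpos by auto
      moreover have "\<omega> \<in> ?E ?x" using w by auto
      ultimately show "\<omega> \<in> (\<Union>x\<in>?F. ?E x)" by blast
    next
      fix \<omega> assume "\<omega> \<in> (\<Union>x\<in>?F. ?E x)"
      then obtain x where x: "x \<in> ?F" "\<omega> \<in> ?E x" by blast
      have "\<forall>j\<le>m. phi n J i (X (t j) \<omega>) = y' j"
      proof (intro allI impI)
        fix j assume "j \<le> m"
        then have "x j \<in> ?fib (y' j)" "X (t j) \<omega> = x j" using x by (auto dest: PiE_mem)
        then show "phi n J i (X (t j) \<omega>) = y' j" by simp
      qed
      then show "\<omega> \<in> {\<omega> \<in> space M. \<forall>j\<le>m. phi n J i (X (t j) \<omega>) = y' j}" using x by simp
    qed
    have "measure M (\<Union>x\<in>?F. ?E x) = (\<Sum>x\<in>?F. measure M (?E x))"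
    proof (rule P.finite_measure_finite_Union)
      show "finite ?F" by (rule finite_PiE) (simp_all add: fibfin)
      show "?E ` ?F \<subseteq> sets M"
      proof (rule image_subsetI)
        fix x show "?E x \<in> sets M" by (rule event_meas, rule Xmeas, rule tpos)
      qed
      show "disjoint_family_on ?E ?F"
      unfolding disjoint_family_on_def
      proof (intro ballI impI)
        fix x x' assume xx: "x \<in> ?F" "x' \<in> ?F" "x \<noteq> x'"
        show "?E x \<inter> ?E x' = {}"
        proof (rule ccontr)
          assume "?E x \<inter> ?E x' \<noteq> {}"
          then obtain \<omega> where "\<omega> \<in> ?E x" "\<omega> \<in> ?E x'" by blast
          then have a: "\<forall>j\<le>m. x j = x' j" by auto
          have "x = x'"
          proof (rule ext)
            fix j
            show "x j = x' j"
            proof (cases "j \<le> m")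
              case True then show ?thesis using a by simp
            next
              case False
              then have "j \<notin> {..m}" by simp
              then show ?thesis using PiE_arb[OF xx(1)] PiE_arb[OF xx(2)] by simp
            qed
          qed
          then show False using xx(3) by simp
        qed
      qed
    qed
    then show ?thesis using eq by simp
  qed
  show ?thesis
    unfolding is_ctmc_def
  proof (intro conjI allI impI ballI)
    fix t :: real and \<omega> assume "0 \<le> t" "\<omega> \<in> space M"
    then show "phi n J i (X t \<omega>) \<in> ?S'" using Xin phi_Omega by blast
  next
    fix t :: real and y assume t: "0 \<le> t"
    have "{\<omega> \<in> space M. phi n J i (X t \<omega>) = y} = (\<Union>x\<in>?fib y. {\<omega> \<in> space M. X t \<omega> = x})"
      using Xin[OF t] by blast
    also have "\<dots> \<in> sets M" by (rule sets.finite_UN[OF fibfin], rule Xmeas[OF t])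
    finally show "{\<omega> \<in> space M. phi n J i (X t \<omega>) = y} \<in> sets M" .
  next
    fix k :: nat and t :: "nat \<Rightarrow> real" and y' :: "nat \<Rightarrow> state"
    assume t0: "0 \<le> t 0" and tinc: "\<forall>j<k. t j < t (Suc j)"
    have tmono: "j \<le> k \<Longrightarrow> t 0 \<le> t j" for j
    proof (induction j)
      case (Suc j)
      then have "t 0 \<le> t j" "t j < t (Suc j)" using tinc by simp_all
      then show ?case by simp
    qed simp
    have tpos: "\<And>j. j \<le> k \<Longrightarrow> 0 \<le> t j" using tmono t0 by fastforce
    have "measure M {\<omega> \<in> space M. \<forall>j\<le>k. phi n J i (X (t j) \<omega>) = y' j}
        = (\<Sum>x\<in>PiE {..k} (\<lambda>j. ?fib (y' j)). measure M {\<omega> \<in> space M. \<forall>j\<le>k. X (t j) \<omega> = x j})"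
      by (rule decomp) (rule tpos)
    also have "\<dots> = (\<Sum>x\<in>PiE {..k} (\<lambda>j. ?fib (y' j)).
          measure M {\<omega> \<in> space M. X (t 0) \<omega> = x 0} * (\<Prod>j<k. ?T (t (Suc j) - t j) (x j) (x (Suc j))))"
      by (rule sum.cong) (simp_all add: H3 t0 tinc)
    also have "\<dots> = (\<Sum>x\<in>PiE {..0} (\<lambda>j. ?fib (y' j)). measure M {\<omega> \<in> space M. X (t 0) \<omega> = x 0})
          * (\<Prod>j<k. ?T' (t (Suc j) - t j) (y' j) (y' (Suc j)))"
      by (rule claim[OF n])
    also have "(\<Sum>x\<in>PiE {..0} (\<lambda>j. ?fib (y' j)). measure M {\<omega> \<in> space M. X (t 0) \<omega> = x 0})
        = measure M {\<omega> \<in> space M. phi n J i (X (t 0) \<omega>) = y' 0}"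
      using decomp[of 0 t y'] t0 by simp
    finally show "measure M {\<omega> \<in> space M. \<forall>j\<le>k. phi n J i (X (t j) \<omega>) = y' j}
        = measure M {\<omega> \<in> space M. phi n J i (X (t 0) \<omega>) = y' 0} * (\<Prod>j<k. ?T' (t (Suc j) - t j) (y' j) (y' (Suc j)))" .
  qed
qed


end
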